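(* Let $\theta\sim G$ with bounded support and let $Y$, taking countably many values, have conditional probability mass function $f_\theta$ given $\theta$; let $Y_1,\dots,Y_n$ be i.i.d. with mass function $p_y=P_G(Y=y)=\int f_\theta(y)\,dG(\theta)$. For a sequence $\varepsilon_n\to0$ let $S_n=\{y: p_y\ge\varepsilon_n/n\}$ and assume: (i) $P_G(Y\in S_n)=1-o(1/n)$; (ii) for $\varepsilon_n\to0$ sufficiently slowly, $|S_n|=O(\log n)$. Let $\hat G$ be a generalized maximum likelihood estimator of $G$, i.e. a maximizer over probability distributions $\tilde G$ of $\prod_{i=1}^n\int f_\theta(Y_i)\,d\tilde G(\theta)$. Let $\eta$ be a function of $\theta$ and let $\Psi=\Psi_{\hat G}$ be a (uniformly) bounded function of $y$ satisfying $E_{\hat G}\Psi_{\hat G}(Y)=E_{\hat G}\eta(\Theta)$, where under $E_{\hat G}$, $\Theta\sim\hat G$ and $Y\mid\Theta\sim f_\Theta$. Then for every $\alpha>0$, $$\hat\eta\equiv E_{\hat G}\eta(\Theta)=\frac1n\sum_{i=1}^n\Psi_{\hat G}(Y_i)+o_P\Big(\frac{(\log n)^{(1+\alpha)/2}}{\sqrt n}\Big).$$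
   Context: Conditions (i)–(ii) are the paper's assumption on $G$ (stated in terms of "an $o(1)$ function"). *)

theory Defs
  imports "HOL-Probability.Probability" "HOL-Library.Landau_Symbols"
begin

text \<open>Conditional pmf of Y given theta is F theta. The mixture likelihood of a sample
  ys (first n coordinates) under a mixing distribution H on the reals.\<close>
definition mix_lik :: "(real \<Rightarrow> nat pmf) \<Rightarrow> real measure \<Rightarrow> nat \<Rightarrow> (nat \<Rightarrow> nat) \<Rightarrow> real" where
  "mix_lik F H n ys = (\<Prod>i<n. \<integral>\<theta>. pmf (F \<theta>) (ys i) \<partial>H)"

definition is_GMLE :: "(real \<Rightarrow> nat pmf) \<Rightarrow> nat \<Rightarrow> (nat \<Rightarrow> nat) \<Rightarrow> real measure \<Rightarrow> bool" where
  "is_GMLE F n ys Gh \<longleftrightarrow> prob_space Gh \<and> sets Gh = sets borel \<and>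
     (\<forall>H. prob_space H \<and> sets H = sets borel \<longrightarrow> mix_lik F H n ys \<le> mix_lik F Gh n ys)"

definition mix_expect :: "(real \<Rightarrow> nat pmf) \<Rightarrow> real measure \<Rightarrow> (nat \<Rightarrow> real) \<Rightarrow> real" where
  "mix_expect F H g = (\<integral>\<theta>. measure_pmf.expectation (F \<theta>) g \<partial>H)"

end

theory Submission
  imports Defs
begin



lemma aux_lin:
  fixes A h c X P Q t :: real
  assumes "0 \<le> X" "X = A - 1 / 2 * h\<^sup>2 + 1 / 2 * (Q - P)" "A \<le> c * h" "P = 1 - t" "Q \<le> 1"
  shows "h\<^sup>2 \<le> 2 * (c * h) + t" using assms by (simp add: field_simps)

lemma core_ineq:
  fixes S :: "nat set" and p q N :: "nat \<Rightarrow> real" and n \<tau> :: real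
  assumes fin: "finite S" and ppos: "\<And>y. y \<in> S \<Longrightarrow> p y > 0"
    and qnn: "\<And>y. y \<in> S \<Longrightarrow> q y \<ge> 0" and Nnn: "\<And>y. y \<in> S \<Longrightarrow> N y \<ge> 0"
    and npos: "n > 0" and sumN: "(\<Sum>y\<in>S. N y) = n"
    and sump: "(\<Sum>y\<in>S. p y) = 1 - \<tau>" and tau: "\<tau> \<ge> 0"
    and sumq: "(\<Sum>y\<in>S. q y) \<le> 1"
    and lik: "(\<Sum>y\<in>S. N y * (sqrt (q y / p y) - 1)) \<ge> 0"
  shows "(\<Sum>y\<in>S. \<bar>q y - N y / n\<bar>) + (1 - (\<Sum>y\<in>S. q y))
     \<le> 9 * sqrt (\<Sum>y\<in>S. (N y / n - p y)\<^sup>2 / p y) + 4 * sqrt \<tau> + \<tau>"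
proof -
  define pn where "pn y = N y / n" for y
  define chi where "chi = (\<Sum>y\<in>S. (pn y - p y)\<^sup>2 / p y)"
  define h where "h = sqrt (\<Sum>y\<in>S. (sqrt (q y) - sqrt (p y))\<^sup>2)"
  have chi_nn: "chi \<ge> 0" unfolding chi_def using ppos by (intro sum_nonneg divide_nonneg_pos) auto
  have h_nn: "h \<ge> 0" unfolding h_def by (simp add: sum_nonneg)
  have sumpn: "(\<Sum>y\<in>S. pn y) = 1"
    unfolding pn_def using sumN npos by (simp add: sum_divide_distrib[symmetric])
  have sp: "sqrt (p y) > 0" if "y \<in> S" for y using ppos[OF that] by simp
  have e1: "pn y * (sqrt (q y / p y) - 1) =
      (pn y - p y) * ((sqrt (q y) - sqrt (p y)) / sqrt (p y))
      + (- (1/2) * (sqrt (q y) - sqrt (p y))\<^sup>2 + (1/2) * (q y - p y))" if "y \<in> S" for y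
  proof -
    have a: "sqrt (q y / p y) = sqrt (q y) / sqrt (p y)" by (simp add: real_sqrt_divide)
    have b: "(sqrt (q y))\<^sup>2 = q y" using qnn[OF that] by simp
    have c: "(sqrt (p y))\<^sup>2 = p y" using ppos[OF that] by simp
    have d: "p y = sqrt (p y) * sqrt (p y)" using c by (simp add: power2_eq_square)
    show ?thesis unfolding a using sp[OF that] b c
      by (simp add: field_simps power2_eq_square)
  qed
  have lik': "(\<Sum>y\<in>S. pn y * (sqrt (q y / p y) - 1)) \<ge> 0"
  proof -
    have "(\<Sum>y\<in>S. pn y * (sqrt (q y / p y) - 1)) = (\<Sum>y\<in>S. N y * (sqrt (q y / p y) - 1)) / n"
      unfolding pn_def by (simp add: sum_divide_distrib)
    then show ?thesis using lik npos by simp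
  qed
  define A where "A = (\<Sum>y\<in>S. (pn y - p y) * ((sqrt (q y) - sqrt (p y)) / sqrt (p y)))"
  have split: "(\<Sum>y\<in>S. pn y * (sqrt (q y / p y) - 1)) =
     A - (1/2) * h\<^sup>2 + (1/2) * ((\<Sum>y\<in>S. q y) - (\<Sum>y\<in>S. p y))"
    unfolding A_def h_def using e1
    by (simp add: sum.distrib sum_subtractf sum_divide_distrib[symmetric] sum_nonneg)
  have A_le: "A \<le> sqrt chi * h"
  proof -
    have "A \<le> (\<Sum>y\<in>S. \<bar>(pn y - p y) / sqrt (p y)\<bar> * \<bar>sqrt (q y) - sqrt (p y)\<bar>)"
      unfolding A_def
    proof (intro sum_mono)
      fix y
      have "(pn y - p y) * ((sqrt (q y) - sqrt (p y)) / sqrt (p y))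
          = ((pn y - p y) / sqrt (p y)) * (sqrt (q y) - sqrt (p y))" by simp
      also have "\<dots> \<le> \<bar>((pn y - p y) / sqrt (p y)) * (sqrt (q y) - sqrt (p y))\<bar>" by (rule abs_ge_self)
      finally show "(pn y - p y) * ((sqrt (q y) - sqrt (p y)) / sqrt (p y))
          \<le> \<bar>(pn y - p y) / sqrt (p y)\<bar> * \<bar>sqrt (q y) - sqrt (p y)\<bar>" by (simp only: abs_mult)
    qed
    also have "\<dots> \<le> L2_set (\<lambda>y. (pn y - p y) / sqrt (p y)) S * L2_set (\<lambda>y. sqrt (q y) - sqrt (p y)) S"
      by (rule L2_set_mult_ineq)
    also have "L2_set (\<lambda>y. (pn y - p y) / sqrt (p y)) S = sqrt chi"
      unfolding L2_set_def chi_def using ppos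
      by (intro arg_cong[where f=sqrt] sum.cong) (auto simp: power_divide less_imp_le)
    also have "L2_set (\<lambda>y. sqrt (q y) - sqrt (p y)) S = h" unfolding L2_set_def h_def ..
    finally show ?thesis .
  qed
  have hsq: "h\<^sup>2 \<le> 2 * (sqrt chi * h) + \<tau>"
    using aux_lin[OF lik' split A_le sump sumq] .
  have h_le: "h \<le> 2 * sqrt chi + sqrt \<tau>"
  proof (rule ccontr)
    assume "\<not> ?thesis"
    hence hb: "h > 2 * sqrt chi + sqrt \<tau>" by simp
    have st: "sqrt \<tau> * sqrt \<tau> = \<tau>" using tau by simp
    have "h * h > (2 * sqrt chi + sqrt \<tau>) * h" using hb h_nn
      by (metis add_nonneg_nonneg mult_strict_right_mono order_le_less_trans real_sqrt_ge_zero chi_nn tau mult_nonneg_nonneg zero_le_numeral)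
    moreover have "sqrt \<tau> * h \<ge> sqrt \<tau> * sqrt \<tau>"
    proof (intro mult_left_mono)
      have "0 \<le> sqrt chi" using chi_nn by simp
      then show "sqrt \<tau> \<le> h" using hb by linarith
    qed (use tau in simp)
    ultimately show False using hsq st by (simp add: power2_eq_square algebra_simps)
  qed
  have pq: "(\<Sum>y\<in>S. \<bar>p y - q y\<bar>) \<le> 2 * h"
  proof -
    have "(\<Sum>y\<in>S. \<bar>p y - q y\<bar>) = (\<Sum>y\<in>S. \<bar>sqrt (q y) - sqrt (p y)\<bar> * \<bar>sqrt (p y) + sqrt (q y)\<bar>)"
    proof (intro sum.cong refl)
      fix y assume y: "y \<in> S"
      have "p y - q y = (sqrt (p y) - sqrt (q y)) * (sqrt (p y) + sqrt (q y))"
        using ppos[OF y] qnn[OF y] by (simp add: algebra_simps)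
      then show "\<bar>p y - q y\<bar> = \<bar>sqrt (q y) - sqrt (p y)\<bar> * \<bar>sqrt (p y) + sqrt (q y)\<bar>"
        by (simp add: abs_mult abs_minus_commute)
    qed
    also have "\<dots> \<le> L2_set (\<lambda>y. sqrt (q y) - sqrt (p y)) S * L2_set (\<lambda>y. sqrt (p y) + sqrt (q y)) S"
      by (rule L2_set_mult_ineq)
    also have "L2_set (\<lambda>y. sqrt (q y) - sqrt (p y)) S = h" unfolding L2_set_def h_def ..
    also have "h * L2_set (\<lambda>y. sqrt (p y) + sqrt (q y)) S \<le> h * 2"
    proof (rule mult_left_mono[OF _ h_nn])
    show "L2_set (\<lambda>y. sqrt (p y) + sqrt (q y)) S \<le> 2"
    proof -
      have "(\<Sum>y\<in>S. (sqrt (p y) + sqrt (q y))\<^sup>2) \<le> (\<Sum>y\<in>S. 2 * (p y + q y))"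
      proof (intro sum_mono)
        fix y assume y: "y \<in> S"
        have "0 \<le> (sqrt (p y) - sqrt (q y))\<^sup>2" by simp
        then show "(sqrt (p y) + sqrt (q y))\<^sup>2 \<le> 2 * (p y + q y)"
          using ppos[OF y] qnn[OF y] by (simp add: power2_eq_square algebra_simps)
      qed
      also have "\<dots> \<le> 4" using sump sumq tau by (simp add: sum.distrib sum_distrib_left[symmetric])
      finally show ?thesis unfolding L2_set_def
        by (metis real_sqrt_four real_sqrt_le_iff)
    qed
    qed
    finally show ?thesis by simp
  qed
  have ppn: "(\<Sum>y\<in>S. \<bar>p y - pn y\<bar>) \<le> sqrt chi"
  proof -
    have "(\<Sum>y\<in>S. \<bar>p y - pn y\<bar>) = (\<Sum>y\<in>S. \<bar>sqrt (p y)\<bar> * \<bar>(pn y - p y) / sqrt (p y)\<bar>)"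
    proof (intro sum.cong refl)
      fix y assume y: "y \<in> S"
      show "\<bar>p y - pn y\<bar> = \<bar>sqrt (p y)\<bar> * \<bar>(pn y - p y) / sqrt (p y)\<bar>"
        using sp[OF y] by (simp add: abs_mult[symmetric] abs_minus_commute)
    qed
    also have "\<dots> \<le> L2_set (\<lambda>y. sqrt (p y)) S * L2_set (\<lambda>y. (pn y - p y) / sqrt (p y)) S"
      by (rule L2_set_mult_ineq)
    also have "L2_set (\<lambda>y. (pn y - p y) / sqrt (p y)) S = sqrt chi"
      unfolding L2_set_def chi_def using ppos
      by (intro arg_cong[where f=sqrt] sum.cong) (auto simp: power_divide less_imp_le)
    also have "L2_set (\<lambda>y. sqrt (p y)) S \<le> 1"
    proof -
      have "(\<Sum>y\<in>S. (sqrt (p y))\<^sup>2) = (\<Sum>y\<in>S. p y)" using ppos by (intro sum.cong) (auto simp: less_imp_le)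
      then show ?thesis unfolding L2_set_def using sump tau by simp
    qed
    finally show ?thesis using chi_nn
      by (metis mult_right_mono mult_1 real_sqrt_ge_zero order_trans le_refl)
  qed
  have t1: "(\<Sum>y\<in>S. \<bar>q y - pn y\<bar>) \<le> (\<Sum>y\<in>S. \<bar>p y - q y\<bar>) + (\<Sum>y\<in>S. \<bar>p y - pn y\<bar>)"
    by (subst sum.distrib[symmetric]) (intro sum_mono, simp)
  have t2: "1 - (\<Sum>y\<in>S. q y) \<le> \<tau> + (\<Sum>y\<in>S. \<bar>p y - q y\<bar>)"
  proof -
    have "(\<Sum>y\<in>S. p y) - (\<Sum>y\<in>S. q y) \<le> (\<Sum>y\<in>S. \<bar>p y - q y\<bar>)"
      by (subst sum_subtractf[symmetric]) (intro sum_mono, simp)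
    then show ?thesis using sump by simp
  qed
  have "(\<Sum>y\<in>S. \<bar>q y - pn y\<bar>) + (1 - (\<Sum>y\<in>S. q y)) \<le> 9 * sqrt chi + 4 * sqrt \<tau> + \<tau>"
    using t1 t2 pq ppn h_le by linarith
  then show ?thesis unfolding pn_def chi_def .
qed



lemma pmf_times_abs_summable:
  fixes P :: "nat pmf" and g :: "nat \<Rightarrow> real"
  assumes "\<And>y. \<bar>g y\<bar> \<le> B"
  shows "Infinite_Set_Sum.abs_summable_on (\<lambda>y. pmf P y * g y) A"
proof (rule abs_summable_on_comparison_test')
  show "Infinite_Set_Sum.abs_summable_on (\<lambda>y. B * pmf P y) A" by (intro abs_summable_on_cmult_right pmf_abs_summable)
  fix y show "norm (pmf P y * g y) \<le> B * pmf P y"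
    using assms[of y] by (simp add: abs_mult mult.commute mult_right_mono)
qed

lemma pmf_split_bound:
  fixes P :: "nat pmf" and g :: "nat \<Rightarrow> real" and S :: "nat set"
  assumes fin: "finite S" and bnd: "\<And>y. \<bar>g y\<bar> \<le> B"
  shows "\<bar>measure_pmf.expectation P g - (\<Sum>y\<in>S. pmf P y * g y)\<bar> \<le> B * (1 - (\<Sum>y\<in>S. pmf P y))"
proof -
  define h where "h y = pmf P y * g y" for y
  have hs: "Infinite_Set_Sum.abs_summable_on h A" for A unfolding h_def by (rule pmf_times_abs_summable[OF bnd])
  have "measure_pmf.expectation P g = infsetsum h UNIV"
    unfolding h_def by (rule pmf_expectation_eq_infsetsum)
  also have "\<dots> = infsetsum h S + infsetsum h (UNIV - S)"
    using infsetsum_Diff[OF hs[of UNIV], of S] by simp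
  also have "infsetsum h S = (\<Sum>y\<in>S. pmf P y * g y)" using fin by (simp add: h_def)
  finally have eq: "measure_pmf.expectation P g - (\<Sum>y\<in>S. pmf P y * g y) = infsetsum h (UNIV - S)" by simp
  have "\<bar>infsetsum h (UNIV - S)\<bar> \<le> infsetsum (\<lambda>y. \<bar>h y\<bar>) (UNIV - S)"
    using norm_infsetsum_bound[of h "UNIV - S"] by simp
  also have "\<dots> \<le> infsetsum (\<lambda>y. B * pmf P y) (UNIV - S)"
  proof (rule infsetsum_mono)
    show "Infinite_Set_Sum.abs_summable_on (\<lambda>y. \<bar>h y\<bar>) (UNIV - S)" using abs_summable_on_normI[OF hs[of "UNIV - S"]] by simp
    show "Infinite_Set_Sum.abs_summable_on (\<lambda>y. B * pmf P y) (UNIV - S)" by (intro abs_summable_on_cmult_right pmf_abs_summable)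
    fix y show "\<bar>h y\<bar> \<le> B * pmf P y" unfolding h_def
      using bnd[of y] by (simp add: abs_mult mult.commute mult_right_mono)
  qed
  also have "\<dots> = B * infsetsum (pmf P) (UNIV - S)" by (intro infsetsum_cmult_right pmf_abs_summable)
  also have "infsetsum (pmf P) (UNIV - S) = measure_pmf.prob P (UNIV - S)"
    by (simp add: measure_pmf_conv_infsetsum)
  also have "\<dots> = 1 - measure_pmf.prob P S" by (simp add: measure_pmf.prob_compl[symmetric] Compl_eq_Diff_UNIV)
  also have "measure_pmf.prob P S = (\<Sum>y\<in>S. pmf P y)" using fin by (simp add: measure_pmf_conv_infsetsum)
  finally show ?thesis using eq by simp
qed

lemma measurable_pmf_expectation:
  fixes F :: "'a \<Rightarrow> nat pmf" and g :: "nat \<Rightarrow> real"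
  assumes meas: "\<And>y. (\<lambda>\<theta>. pmf (F \<theta>) y) \<in> borel_measurable M" and bnd: "\<And>y. \<bar>g y\<bar> \<le> B"
  shows "(\<lambda>\<theta>. measure_pmf.expectation (F \<theta>) g) \<in> borel_measurable M"
proof (rule borel_measurable_LIMSEQ_real)
  fix \<theta>
  have "(\<lambda>y. pmf (F \<theta>) y * g y) sums infsetsum (\<lambda>y. pmf (F \<theta>) y * g y) UNIV"
    by (intro sums_infsetsum_nat' pmf_times_abs_summable[OF bnd])
  then show "(\<lambda>m. \<Sum>y<m. pmf (F \<theta>) y * g y) \<longlonglongrightarrow> measure_pmf.expectation (F \<theta>) g"
    by (simp add: sums_def pmf_expectation_eq_infsetsum)
next
  fix m show "(\<lambda>\<theta>. \<Sum>y<m. pmf (F \<theta>) y * g y) \<in> borel_measurable M"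
    using meas by measurable
qed



lemma pmf_integrable_bdd:
  fixes f :: "'a \<Rightarrow> real"
  assumes "\<And>x. \<bar>f x\<bar> \<le> c"
  shows "integrable (measure_pmf M) f"
  using assms by (intro measure_pmf.integrable_const_bound[where B=c]) auto

lemma prod_01:
  assumes "finite A"
  shows "(\<Prod>k\<in>A. if Q k then 0 else (1::real)) = (if \<exists>k\<in>A. Q k then 0 else 1)"
  using assms by (induction rule: finite_induct) auto

lemma expect_ind_pmf:
  "measure_pmf.expectation (Y :: 'b pmf) (\<lambda>v. if k \<in> J \<and> v \<noteq> y then 0 else (1::real))
     = (if k \<in> J then pmf Y y else 1)"
proof (cases "k \<in> J")
  case True
  have "(\<lambda>v. if k \<in> J \<and> v \<noteq> y then 0 else (1::real)) = indicator {y}"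
    using True by (auto simp: indicator_def)
  then show ?thesis using True by (simp add: measure_pmf_single)
qed simp

lemma pair_expect:
  fixes I :: "'a set" and Y :: "'b pmf"
  assumes fin: "finite I" and i: "i \<in> I" and j: "j \<in> I"
  shows "measure_pmf.expectation (Pi_pmf I d (\<lambda>_. Y))
           (\<lambda>ys. (if ys i = y then 1 else 0) * (if ys j = y then 1 else (0::real)))
         = (if i = j then pmf Y y else (pmf Y y)\<^sup>2)"
proof -
  define f where "f k v = (if k \<in> {i, j} \<and> v \<noteq> y then 0 else (1::real))" for k v
  have eq: "(\<lambda>ys. (if ys i = y then 1 else 0) * (if ys j = y then 1 else (0::real)))
      = (\<lambda>ys. \<Prod>k\<in>I. f k (ys k))"
  proof
    fix ys :: "'a \<Rightarrow> 'b"
    have "(\<Prod>k\<in>I. f k (ys k)) = (if \<exists>k\<in>I. k \<in> {i, j} \<and> ys k \<noteq> y then 0 else 1)"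
      unfolding f_def by (rule prod_01[OF fin])
    then show "(if ys i = y then 1 else 0) * (if ys j = y then 1 else (0::real)) = (\<Prod>k\<in>I. f k (ys k))"
      using i j by auto
  qed
  have "measure_pmf.expectation (Pi_pmf I d (\<lambda>_. Y)) (\<lambda>ys. \<Prod>k\<in>I. f k (ys k))
      = (\<Prod>k\<in>I. measure_pmf.expectation Y (f k))"
    by (rule expectation_prod_Pi_pmf[OF fin]) (auto simp: f_def intro!: pmf_integrable_bdd[where c=1])
  also have "\<dots> = (\<Prod>k\<in>I. if k \<in> {i, j} then pmf Y y else 1)"
    unfolding f_def by (intro prod.cong refl expect_ind_pmf)
  also have "\<dots> = (\<Prod>k\<in>{i, j}. pmf Y y)"
  proof -
    have "I \<inter> {i, j} = {i, j}" using i j by auto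
    then show ?thesis using prod.inter_restrict[OF fin, of "\<lambda>_. pmf Y y" "{i, j}"] by simp
  qed
  also have "\<dots> = (if i = j then pmf Y y else (pmf Y y)\<^sup>2)"
    by (simp add: power2_eq_square)
  finally show ?thesis by (simp add: eq)
qed

lemma count_variance:
  fixes Y :: "nat pmf" and n :: nat
  shows "measure_pmf.expectation (Pi_pmf {..<n} 0 (\<lambda>_. Y))
           (\<lambda>ys. (real (card {i\<in>{..<n}. ys i = y}) - real n * pmf Y y)\<^sup>2)
         = real n * pmf Y y * (1 - pmf Y y)"
proof -
  define p where "p = pmf Y y"
  define X where "X i ys = (if ys i = y then 1 else (0::real))" for i and ys :: "nat \<Rightarrow> nat"
  let ?P = "Pi_pmf {..<n} (0::nat) (\<lambda>_. Y)"
  have card_eq: "real (card {i\<in>{..<n}. ys i = y}) = (\<Sum>i<n. X i ys)" for ys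
  proof -
    have "{i\<in>{..<n}. ys i = y} = {..<n} \<inter> {i. ys i = y}" by auto
    then show ?thesis unfolding X_def by (simp add: sum.If_cases)
  qed
  have sq: "(real (card {i\<in>{..<n}. ys i = y}) - real n * p)\<^sup>2
      = (\<Sum>i<n. \<Sum>j<n. X i ys * X j ys) - 2 * real n * p * (\<Sum>i<n. X i ys) + (real n * p)\<^sup>2" for ys
    unfolding card_eq by (simp add: power2_eq_square sum_product algebra_simps)
  have intX: "integrable (measure_pmf ?P) (X i)" for i
    by (rule pmf_integrable_bdd[where c=1]) (simp add: X_def)
  have intXX: "integrable (measure_pmf ?P) (\<lambda>ys. X i ys * X j ys)" for i j
    by (rule pmf_integrable_bdd[where c=1]) (simp add: X_def)
  have EXX: "measure_pmf.expectation ?P (\<lambda>ys. X i ys * X j ys) = (if i = j then p else p\<^sup>2)"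
    if "i < n" "j < n" for i j
    unfolding X_def p_def using that by (intro pair_expect) auto
  have EX: "measure_pmf.expectation ?P (X i) = p" if "i < n" for i
  proof -
    have "X i = (\<lambda>ys. X i ys * X i ys)" by (auto simp: X_def)
    then show ?thesis using EXX[OF that that] by simp
  qed
  have "measure_pmf.expectation ?P (\<lambda>ys. (real (card {i\<in>{..<n}. ys i = y}) - real n * p)\<^sup>2)
      = measure_pmf.expectation ?P (\<lambda>ys. (\<Sum>i<n. \<Sum>j<n. X i ys * X j ys))
        - 2 * real n * p * measure_pmf.expectation ?P (\<lambda>ys. \<Sum>i<n. X i ys) + (real n * p)\<^sup>2"
    unfolding sq using intX intXX
    by (subst Bochner_Integration.integral_add Bochner_Integration.integral_diff
        Bochner_Integration.integral_mult_right; (auto intro!: Bochner_Integration.integrable_sum)?)+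
  also have "measure_pmf.expectation ?P (\<lambda>ys. (\<Sum>i<n. \<Sum>j<n. X i ys * X j ys))
      = (\<Sum>i<n. \<Sum>j<n. (if i = j then p else p\<^sup>2))"
  proof -
    have "measure_pmf.expectation ?P (\<lambda>ys. (\<Sum>i<n. \<Sum>j<n. X i ys * X j ys))
       = (\<Sum>i<n. measure_pmf.expectation ?P (\<lambda>ys. \<Sum>j<n. X i ys * X j ys))"
      using intXX by (intro Bochner_Integration.integral_sum) (auto intro!: Bochner_Integration.integrable_sum)
    also have "\<dots> = (\<Sum>i<n. \<Sum>j<n. measure_pmf.expectation ?P (\<lambda>ys. X i ys * X j ys))"
      using intXX by (intro sum.cong refl Bochner_Integration.integral_sum) auto
    also have "\<dots> = (\<Sum>i<n. \<Sum>j<n. (if i = j then p else p\<^sup>2))"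
      using EXX by (intro sum.cong refl) auto
    finally show ?thesis .
  qed
  also have "measure_pmf.expectation ?P (\<lambda>ys. \<Sum>i<n. X i ys) = real n * p"
    using intX EX by (subst Bochner_Integration.integral_sum) auto
  also have "(\<Sum>i<n. \<Sum>j<n. (if i = j then p else p\<^sup>2)) = real n * p + real n * (real n - 1) * p\<^sup>2"
  proof -
    have "(\<Sum>j<n. (if i = j then p else p\<^sup>2)) = p + (real n - 1) * p\<^sup>2" if "i < n" for i
    proof -
      have "(\<Sum>j<n. (if i = j then p else p\<^sup>2)) = (\<Sum>j<n. p\<^sup>2 + (if i = j then p - p\<^sup>2 else 0))"
        by (intro sum.cong) auto
      also have "\<dots> = real n * p\<^sup>2 + (p - p\<^sup>2)" using that by (simp add: sum.distrib)
      finally show ?thesis by (simp add: algebra_simps)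
    qed
    then have "(\<Sum>i<n. \<Sum>j<n. (if i = j then p else p\<^sup>2)) = (\<Sum>i<n. p + (real n - 1) * p\<^sup>2)"
      by (intro sum.cong) auto
    then show ?thesis by (simp add: algebra_simps)
  qed
  finally show ?thesis unfolding p_def by (simp add: power2_eq_square algebra_simps)
qed




lemma mix_bound:
  fixes H :: "real measure" and F :: "real \<Rightarrow> nat pmf" and g :: "nat \<Rightarrow> real" and S :: "nat set"
  assumes H: "prob_space H" and Hs: "sets H = sets borel"
    and Fm: "\<And>y. (\<lambda>\<theta>. pmf (F \<theta>) y) \<in> borel_measurable borel"
    and bnd: "\<And>y. \<bar>g y\<bar> \<le> B" and fin: "finite S"
  shows "\<bar>mix_expect F H g - (\<Sum>y\<in>S. (\<integral>\<theta>. pmf (F \<theta>) y \<partial>H) * g y)\<bar>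
           \<le> B * (1 - (\<Sum>y\<in>S. (\<integral>\<theta>. pmf (F \<theta>) y \<partial>H)))"
proof -
  interpret prob_space H by (rule H)
  have FmH: "(\<lambda>\<theta>. pmf (F \<theta>) y) \<in> borel_measurable H" for y
    using Fm[of y] by (simp add: measurable_cong_sets[OF Hs refl])
  define E where "E \<theta> = measure_pmf.expectation (F \<theta>) g" for \<theta>
  define Q where "Q \<theta> = (\<Sum>y\<in>S. pmf (F \<theta>) y * g y)" for \<theta>
  define R where "R \<theta> = (\<Sum>y\<in>S. pmf (F \<theta>) y)" for \<theta>
  have Em: "E \<in> borel_measurable H" unfolding E_def
    by (rule measurable_pmf_expectation[OF FmH bnd])
  have Eb: "\<bar>E \<theta>\<bar> \<le> B" for \<theta>
    using pmf_split_bound[of "{}" g B "F \<theta>"] bnd unfolding E_def by simp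
  have intE: "integrable H E"
    by (rule integrable_const_bound[where B=B]) (use Em Eb in \<open>auto intro!: AE_I2\<close>)
  have intp: "integrable H (\<lambda>\<theta>. pmf (F \<theta>) y)" for y
    by (rule integrable_const_bound[where B=1]) (use FmH pmf_le_1 in \<open>auto intro!: AE_I2\<close>)
  have intQ: "integrable H Q" unfolding Q_def using intp by auto
  have intR: "integrable H R" unfolding R_def using intp by auto
  have "mix_expect F H g - (\<Sum>y\<in>S. (\<integral>\<theta>. pmf (F \<theta>) y \<partial>H) * g y) = (\<integral>\<theta>. E \<theta> - Q \<theta> \<partial>H)"
  proof -
    have "(\<integral>\<theta>. Q \<theta> \<partial>H) = (\<Sum>y\<in>S. (\<integral>\<theta>. pmf (F \<theta>) y \<partial>H) * g y)"
      unfolding Q_def using intp by (subst Bochner_Integration.integral_sum) auto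
    then show ?thesis unfolding mix_expect_def E_def[symmetric]
      using intE intQ by simp
  qed
  also have "\<bar>\<dots>\<bar> \<le> (\<integral>\<theta>. B * (1 - R \<theta>) \<partial>H)"
  proof (rule integral_abs_bound_integral)
    show "integrable H (\<lambda>\<theta>. E \<theta> - Q \<theta>)" using intE intQ by auto
    show "integrable H (\<lambda>\<theta>. B * (1 - R \<theta>))" using intR by auto
    fix \<theta> show "\<bar>E \<theta> - Q \<theta>\<bar> \<le> B * (1 - R \<theta>)"
      unfolding E_def Q_def R_def by (rule pmf_split_bound[OF fin bnd])
  qed
  also have "(\<integral>\<theta>. B * (1 - R \<theta>) \<partial>H) = B * (1 - (\<Sum>y\<in>S. (\<integral>\<theta>. pmf (F \<theta>) y \<partial>H)))"
  proof -
    have "(\<integral>\<theta>. R \<theta> \<partial>H) = (\<Sum>y\<in>S. (\<integral>\<theta>. pmf (F \<theta>) y \<partial>H))"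
      unfolding R_def using intp by (subst Bochner_Integration.integral_sum) auto
    then show ?thesis using intR prob_space by simp
  qed
  finally show ?thesis .
qed

lemma sum_count:
  fixes ys :: "nat \<Rightarrow> nat" and g :: "nat \<Rightarrow> real"
  assumes fin: "finite S" and inS: "\<And>i. i < n \<Longrightarrow> ys i \<in> S"
  shows "(\<Sum>i<n. g (ys i)) = (\<Sum>y\<in>S. real (card {i\<in>{..<n}. ys i = y}) * g y)"
proof -
  have "(\<Sum>i<n. g (ys i)) = (\<Sum>y\<in>S. \<Sum>i\<in>{i\<in>{..<n}. ys i = y}. g (ys i))"
    using inS by (intro sum.group[symmetric] fin) auto
  also have "\<dots> = (\<Sum>y\<in>S. real (card {i\<in>{..<n}. ys i = y}) * g y)"
    by (intro sum.cong refl) auto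
  finally show ?thesis .
qed


lemma sample_bound:
  fixes G Gh :: "real measure" and F :: "real \<Rightarrow> nat pmf" and Ypmf :: "nat pmf"
    and eta :: "real \<Rightarrow> real" and Psi :: "real measure \<Rightarrow> nat \<Rightarrow> real" and B :: real
    and n :: nat and ys :: "nat \<Rightarrow> nat" and S :: "nat set"
  assumes G_prob: "prob_space G" and G_sets: "sets G = sets borel"
    and F_meas: "\<And>y. (\<lambda>\<theta>. pmf (F \<theta>) y) \<in> borel_measurable borel"
    and Y_marg: "\<And>y. pmf Ypmf y = (\<integral>\<theta>. pmf (F \<theta>) y \<partial>G)"
    and GM: "is_GMLE F n ys Gh"
    and unb: "mix_expect F Gh (Psi Gh) = (\<integral>\<theta>. eta \<theta> \<partial>Gh)"
    and Psi_bdd: "\<And>H y. \<bar>Psi H y\<bar> \<le> B"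
    and npos: "n > 0" and supp: "\<And>i. i < n \<Longrightarrow> ys i \<in> set_pmf Ypmf"
    and fin: "finite S" and Spos: "\<And>y. y \<in> S \<Longrightarrow> pmf Ypmf y > 0"
    and inS: "\<And>i. i < n \<Longrightarrow> ys i \<in> S"
  shows "\<bar>(\<integral>\<theta>. eta \<theta> \<partial>Gh) - (\<Sum>i<n. Psi Gh (ys i)) / real n\<bar>
     \<le> B * (9 * sqrt (\<Sum>y\<in>S. (real (card {i\<in>{..<n}. ys i = y}) / real n - pmf Ypmf y)\<^sup>2 / pmf Ypmf y)
            + 4 * sqrt (1 - (\<Sum>y\<in>S. pmf Ypmf y)) + (1 - (\<Sum>y\<in>S. pmf Ypmf y)))"
proof -
  define p where "p y = pmf Ypmf y" for y
  define q where "q y = (\<integral>\<theta>. pmf (F \<theta>) y \<partial>Gh)" for y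
  define N where "N y = real (card {i\<in>{..<n}. ys i = y})" for y
  define \<tau> where "\<tau> = 1 - (\<Sum>y\<in>S. p y)"
  have Gh: "prob_space Gh" and Ghs: "sets Gh = sets borel"
    and maxl: "\<And>H. prob_space H \<and> sets H = sets borel \<Longrightarrow> mix_lik F H n ys \<le> mix_lik F Gh n ys"
    using GM unfolding is_GMLE_def by auto
  interpret Ghp: prob_space Gh by (rule Gh)
  have FmGh: "(\<lambda>\<theta>. pmf (F \<theta>) y) \<in> borel_measurable Gh" for y
    using F_meas[of y] by (simp add: measurable_cong_sets[OF Ghs refl])
  have intp: "integrable Gh (\<lambda>\<theta>. pmf (F \<theta>) y)" for y
    by (rule Ghp.integrable_const_bound[where B=1]) (use FmGh pmf_le_1 in \<open>auto intro!: AE_I2\<close>)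
  have qnn: "q y \<ge> 0" for y unfolding q_def by (rule Bochner_Integration.integral_nonneg) simp
  have sumq: "(\<Sum>y\<in>S. q y) \<le> 1"
  proof -
    have "(\<Sum>y\<in>S. q y) = (\<integral>\<theta>. (\<Sum>y\<in>S. pmf (F \<theta>) y) \<partial>Gh)"
      unfolding q_def using intp by (subst Bochner_Integration.integral_sum) auto
    also have "\<dots> \<le> (\<integral>\<theta>. 1 \<partial>Gh)"
    proof (rule integral_mono)
      show "integrable Gh (\<lambda>\<theta>. \<Sum>y\<in>S. pmf (F \<theta>) y)" using intp by auto
      show "integrable Gh (\<lambda>\<theta>. 1::real)" by simp
      fix \<theta>
      have "(\<Sum>y\<in>S. pmf (F \<theta>) y) = measure_pmf.prob (F \<theta>) S"
        using fin by (simp add: measure_pmf_conv_infsetsum)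
      then show "(\<Sum>y\<in>S. pmf (F \<theta>) y) \<le> 1" by simp
    qed
    also have "\<dots> = 1" by (simp add: Ghp.prob_space)
    finally show ?thesis .
  qed
  have sump: "(\<Sum>y\<in>S. p y) = 1 - \<tau>" unfolding \<tau>_def by simp
  have tau: "\<tau> \<ge> 0"
  proof -
    have "(\<Sum>y\<in>S. p y) = measure_pmf.prob Ypmf S"
      using fin by (simp add: p_def measure_pmf_conv_infsetsum)
    then show ?thesis unfolding \<tau>_def by simp
  qed
  have ppos: "p (ys i) > 0" if "i < n" for i
    using supp[OF that] unfolding p_def by (simp add: pmf_positive)
  have likG: "mix_lik F G n ys = (\<Prod>i<n. p (ys i))"
    unfolding mix_lik_def p_def Y_marg ..
  have likGh: "mix_lik F Gh n ys = (\<Prod>i<n. q (ys i))"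
    unfolding mix_lik_def q_def ..
  have prodle: "(\<Prod>i<n. p (ys i)) \<le> (\<Prod>i<n. q (ys i))"
    using maxl[of G] G_prob G_sets likG likGh by simp
  have prodp_pos: "(\<Prod>i<n. p (ys i)) > 0" using ppos by (intro prod_pos) auto
  have qpos: "q (ys i) > 0" if "i < n" for i
  proof (rule ccontr)
    assume "\<not> q (ys i) > 0"
    then have "q (ys i) = 0" using qnn[of "ys i"] by simp
    then have "(\<Prod>i<n. q (ys i)) = 0" using that by (intro prod_zero) auto
    then show False using prodle prodp_pos by linarith
  qed
  have lnsum: "(\<Sum>i<n. ln (q (ys i) / p (ys i))) \<ge> 0"
  proof -
    have "(\<Sum>i<n. ln (q (ys i) / p (ys i))) = (\<Sum>i<n. ln (q (ys i))) - (\<Sum>i<n. ln (p (ys i)))"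
    proof (subst sum_subtractf[symmetric], intro sum.cong refl)
      fix i assume "i \<in> {..<n}"
      then have "q (ys i) > 0" "p (ys i) > 0" using qpos ppos by auto
      then show "ln (q (ys i) / p (ys i)) = ln (q (ys i)) - ln (p (ys i))" by (rule ln_divide_pos)
    qed
    also have "\<dots> = ln (\<Prod>i<n. q (ys i)) - ln (\<Prod>i<n. p (ys i))"
    proof -
      have "ln (\<Prod>i<n. q (ys i)) = (\<Sum>i<n. ln (q (ys i)))"
        using qpos by (intro ln_prod) (auto simp: less_imp_neq[symmetric])
      moreover have "ln (\<Prod>i<n. p (ys i)) = (\<Sum>i<n. ln (p (ys i)))"
        using ppos by (intro ln_prod) (auto simp: less_imp_neq[symmetric])
      ultimately show ?thesis by simp
    qed
    also have "\<dots> \<ge> 0" using prodle prodp_pos by simp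
    finally show ?thesis .
  qed
  have sqsum: "(\<Sum>i<n. sqrt (q (ys i) / p (ys i)) - 1) \<ge> 0"
  proof -
    have "ln (q (ys i) / p (ys i)) \<le> 2 * (sqrt (q (ys i) / p (ys i)) - 1)" if "i < n" for i
    proof -
      define r where "r = q (ys i) / p (ys i)"
      have r: "r > 0" unfolding r_def using qpos[OF that] ppos[OF that] by simp
      have "ln r = 2 * ln (sqrt r)" using r by (simp add: ln_sqrt)
      also have "\<dots> \<le> 2 * (sqrt r - 1)"
        using ln_le_minus_one[of "sqrt r"] r by simp
      finally show ?thesis unfolding r_def .
    qed
    then have "(\<Sum>i<n. ln (q (ys i) / p (ys i))) \<le> (\<Sum>i<n. 2 * (sqrt (q (ys i) / p (ys i)) - 1))"
      by (intro sum_mono) auto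
    also have "(\<Sum>i<n. 2 * (sqrt (q (ys i) / p (ys i)) - 1)) = 2 * (\<Sum>i<n. sqrt (q (ys i) / p (ys i)) - 1)"
      by (rule sum_distrib_left[symmetric])
    finally show ?thesis using lnsum by linarith
  qed
  have lik: "(\<Sum>y\<in>S. N y * (sqrt (q y / p y) - 1)) \<ge> 0"
    using sqsum sum_count[OF fin inS, where g="\<lambda>y. sqrt (q y / p y) - 1"] unfolding N_def by simp
  have sumN: "(\<Sum>y\<in>S. N y) = real n"
    using sum_count[OF fin inS, where g="\<lambda>y. 1"] unfolding N_def by simp
  have core: "(\<Sum>y\<in>S. \<bar>q y - N y / real n\<bar>) + (1 - (\<Sum>y\<in>S. q y))
     \<le> 9 * sqrt (\<Sum>y\<in>S. (N y / real n - p y)\<^sup>2 / p y) + 4 * sqrt \<tau> + \<tau>"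
    by (rule core_ineq[OF fin _ qnn _ _ sumN sump tau sumq lik])
       (use Spos npos in \<open>auto simp: p_def N_def\<close>)
  have mb: "\<bar>mix_expect F Gh (Psi Gh) - (\<Sum>y\<in>S. q y * Psi Gh y)\<bar> \<le> B * (1 - (\<Sum>y\<in>S. q y))"
    unfolding q_def by (rule mix_bound[OF Gh Ghs F_meas Psi_bdd fin])
  have emp: "(\<Sum>i<n. Psi Gh (ys i)) / real n = (\<Sum>y\<in>S. N y / real n * Psi Gh y)"
    using sum_count[OF fin inS, where g="Psi Gh"] unfolding N_def by (simp add: sum_divide_distrib)
  have d2: "\<bar>(\<Sum>y\<in>S. q y * Psi Gh y) - (\<Sum>y\<in>S. N y / real n * Psi Gh y)\<bar> \<le> B * (\<Sum>y\<in>S. \<bar>q y - N y / real n\<bar>)"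
  proof -
    have "\<bar>(\<Sum>y\<in>S. q y * Psi Gh y) - (\<Sum>y\<in>S. N y / real n * Psi Gh y)\<bar>
        = \<bar>\<Sum>y\<in>S. (q y - N y / real n) * Psi Gh y\<bar>" by (simp add: sum_subtractf left_diff_distrib)
    also have "\<dots> \<le> (\<Sum>y\<in>S. \<bar>(q y - N y / real n) * Psi Gh y\<bar>)" by (rule sum_abs)
    also have "\<dots> \<le> (\<Sum>y\<in>S. B * \<bar>q y - N y / real n\<bar>)"
      by (intro sum_mono) (simp add: abs_mult mult.commute mult_right_mono Psi_bdd)
    finally show ?thesis by (simp add: sum_distrib_left)
  qed
  have "\<bar>(\<integral>\<theta>. eta \<theta> \<partial>Gh) - (\<Sum>i<n. Psi Gh (ys i)) / real n\<bar>
      \<le> B * (1 - (\<Sum>y\<in>S. q y)) + B * (\<Sum>y\<in>S. \<bar>q y - N y / real n\<bar>)"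
    using mb d2 unfolding unb emp by linarith
  also have "\<dots> = B * ((\<Sum>y\<in>S. \<bar>q y - N y / real n\<bar>) + (1 - (\<Sum>y\<in>S. q y)))" by (simp add: algebra_simps)
  also have "\<dots> \<le> B * (9 * sqrt (\<Sum>y\<in>S. (N y / real n - p y)\<^sup>2 / p y) + 4 * sqrt \<tau> + \<tau>)"
  proof (rule mult_left_mono[OF core])
    show "0 \<le> B" using Psi_bdd[of Gh 0] by linarith
  qed
  finally show ?thesis unfolding N_def p_def \<tau>_def .
qed





lemma chi_markov:
  fixes Y :: "nat pmf" and S :: "nat set" and n :: nat and t :: real
  assumes fin: "finite S" and Spos: "\<And>y. y \<in> S \<Longrightarrow> pmf Y y > 0" and npos: "n > 0" and t: "t > 0"
  shows "measure_pmf.prob (Pi_pmf {..<n} 0 (\<lambda>_. Y))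
     {ys. t \<le> (\<Sum>y\<in>S. (real (card {i\<in>{..<n}. ys i = y}) / real n - pmf Y y)\<^sup>2 / pmf Y y)}
     \<le> real (card S) / (real n * t)"
proof -
  let ?P = "Pi_pmf {..<n} (0::nat) (\<lambda>_. Y)"
  define u where "u y ys = (real (card {i\<in>{..<n}. ys i = y}) / real n - pmf Y y)\<^sup>2 / pmf Y y" for y ys
  have uint: "integrable (measure_pmf ?P) (u y)" if "y \<in> S" for y
  proof (rule pmf_integrable_bdd[where c="(1 + 1)\<^sup>2 / pmf Y y"])
    fix ys :: "nat \<Rightarrow> nat"
    have c: "real (card {i\<in>{..<n}. ys i = y}) \<le> real n"
    proof -
      have "card {i\<in>{..<n}. ys i = y} \<le> card {..<n}" by (intro card_mono) auto
      then show ?thesis by simp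
    qed
    have "\<bar>real (card {i\<in>{..<n}. ys i = y}) / real n - pmf Y y\<bar> \<le> 1 + 1"
    proof -
      have "real (card {i\<in>{..<n}. ys i = y}) / real n \<le> 1" using c npos by simp
      moreover have "real (card {i\<in>{..<n}. ys i = y}) / real n \<ge> 0" by simp
      ultimately show ?thesis using pmf_le_1[of Y y] pmf_nonneg[of Y y] by linarith
    qed
    then have "(real (card {i\<in>{..<n}. ys i = y}) / real n - pmf Y y)\<^sup>2 \<le> (1 + 1)\<^sup>2"
      by (metis abs_le_square_iff abs_of_nonneg one_add_one zero_le_numeral)
    then show "\<bar>u y ys\<bar> \<le> (1 + 1)\<^sup>2 / pmf Y y"
      unfolding u_def using Spos[OF that] by (simp add: divide_right_mono)
  qed
  have Eu: "measure_pmf.expectation ?P (u y) \<le> 1 / real n" if "y \<in> S" for y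
  proof -
    have py: "pmf Y y > 0" using Spos[OF that] .
    have "u y = (\<lambda>ys. (real (card {i\<in>{..<n}. ys i = y}) - real n * pmf Y y)\<^sup>2 / (real n ^ 2 * pmf Y y))"
      unfolding u_def using npos by (intro ext) (simp add: power_divide field_simps)
    then have "measure_pmf.expectation ?P (u y) = measure_pmf.expectation ?P
       (\<lambda>ys. (real (card {i\<in>{..<n}. ys i = y}) - real n * pmf Y y)\<^sup>2) / (real n ^ 2 * pmf Y y)"
      by (simp only: integral_divide_zero)
    also have "\<dots> = real n * pmf Y y * (1 - pmf Y y) / (real n ^ 2 * pmf Y y)"
      by (simp only: count_variance)
    also have "\<dots> = (1 - pmf Y y) / real n" using npos py by (simp add: power2_eq_square field_simps)
    also have "\<dots> \<le> 1 / real n" using py npos by (simp add: divide_right_mono)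
    finally show ?thesis .
  qed
  have int: "integrable (measure_pmf ?P) (\<lambda>ys. \<Sum>y\<in>S. u y ys)" using uint by auto
  have E: "measure_pmf.expectation ?P (\<lambda>ys. \<Sum>y\<in>S. u y ys) \<le> real (card S) / real n"
  proof -
    have "measure_pmf.expectation ?P (\<lambda>ys. \<Sum>y\<in>S. u y ys) = (\<Sum>y\<in>S. measure_pmf.expectation ?P (u y))"
      using uint by (subst Bochner_Integration.integral_sum) auto
    also have "\<dots> \<le> (\<Sum>y\<in>S. 1 / real n)" using Eu by (intro sum_mono) auto
    finally show ?thesis by simp
  qed
  have "measure_pmf.prob ?P {ys \<in> space (measure_pmf ?P). t \<le> (\<Sum>y\<in>S. u y ys)}
      \<le> measure_pmf.expectation ?P (\<lambda>ys. \<Sum>y\<in>S. u y ys) / t"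
  proof (rule integral_Markov_inequality_measure[OF int])
    have "0 \<le> (\<Sum>y\<in>S. u y ys)" for ys
      unfolding u_def using Spos by (intro sum_nonneg divide_nonneg_pos) auto
    then show "AE x in measure_pmf ?P. 0 \<le> (\<Sum>y\<in>S. u y x)" by simp
  qed (use t in auto)
  also have "\<dots> \<le> (real (card S) / real n) / t" by (intro divide_right_mono) (use E t in auto)
  finally show ?thesis unfolding u_def by (simp add: field_simps)
qed

lemma bad_event:
  fixes Y :: "nat pmf" and S :: "nat set" and n :: nat
  shows "measure_pmf.prob (Pi_pmf {..<n} 0 (\<lambda>_. Y)) {ys. \<exists>i<n. ys i \<notin> S}
     \<le> real n * (1 - measure_pmf.prob Y S)"
proof -
  let ?P = "Pi_pmf {..<n} (0::nat) (\<lambda>_. Y)"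
  have eq: "{ys. \<exists>i<n. ys i \<notin> S} = (\<Union>i\<in>{..<n}. (\<lambda>f. f i) -` (- S))" by auto
  have "measure_pmf.prob ?P (\<Union>i\<in>{..<n}. (\<lambda>f. f i) -` (- S))
      \<le> (\<Sum>i\<in>{..<n}. measure_pmf.prob ?P ((\<lambda>f. f i) -` (- S)))"
    by (rule measure_UNION_le) auto
  also have "\<dots> = (\<Sum>i\<in>{..<n}. 1 - measure_pmf.prob Y S)"
  proof (intro sum.cong refl)
    fix i assume i: "i \<in> {..<n}"
    have "measure_pmf.prob ?P ((\<lambda>f. f i) -` (- S)) = measure_pmf.prob (map_pmf (\<lambda>f. f i) ?P) (- S)"
      by simp
    also have "map_pmf (\<lambda>f. f i) ?P = Y" using i by (subst Pi_pmf_component) auto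
    also have "measure_pmf.prob Y (- S) = 1 - measure_pmf.prob Y S"
    proof -
      have "measure_pmf.prob Y (UNIV - S) = 1 - measure_pmf.prob Y S"
        using measure_pmf.prob_compl[of S Y] by simp
      then show ?thesis by (simp add: Compl_eq_Diff_UNIV)
    qed
    finally show "measure_pmf.prob ?P ((\<lambda>f. f i) -` (- S)) = 1 - measure_pmf.prob Y S" .
  qed
  finally show ?thesis unfolding eq by simp
qed


lemma finite_pmf_ge:
  fixes P :: "nat pmf" assumes c: "c > 0"
  shows "finite {y. c \<le> pmf P y}"
proof (rule ccontr)
  assume inf: "infinite {y. c \<le> pmf P y}"
  define k where "k = nat \<lceil>1 / c\<rceil> + 1"
  obtain A where A: "finite A" "card A = k" "A \<subseteq> {y. c \<le> pmf P y}"
    using infinite_arbitrarily_large[OF inf] by blast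
  have "real k * c = (\<Sum>y\<in>A. c)" using A by simp
  also have "\<dots> \<le> (\<Sum>y\<in>A. pmf P y)" using A by (intro sum_mono) auto
  also have "\<dots> = measure_pmf.prob P A" using A by (simp add: measure_pmf_conv_infsetsum)
  also have "\<dots> \<le> 1" by simp
  finally have "real k * c \<le> 1" .
  moreover have "real k * c > 1"
  proof -
    have "real k > 1 / c" unfolding k_def by linarith
    then show ?thesis using c by (simp add: field_simps)
  qed
  ultimately show False by simp
qed

theorem theorem3:
  fixes G :: "real measure" and F :: "real \<Rightarrow> nat pmf" and Ypmf :: "nat pmf"
    and Ghat :: "nat \<Rightarrow> (nat \<Rightarrow> nat) \<Rightarrow> real measure"
    and eta :: "real \<Rightarrow> real" and Psi :: "real measure \<Rightarrow> nat \<Rightarrow> real" and B :: real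
  assumes G_prob: "prob_space G" and G_sets: "sets G = sets borel"
    and G_bdd: "\<exists>K. AE \<theta> in G. \<bar>\<theta>\<bar> \<le> K"
    and F_meas: "\<And>y. (\<lambda>\<theta>. pmf (F \<theta>) y) \<in> borel_measurable borel"
    and Y_marg: "\<And>y. pmf Ypmf y = (\<integral>\<theta>. pmf (F \<theta>) y \<partial>G)"
    and cond: "\<exists>\<epsilon> :: nat \<Rightarrow> real. (\<forall>n. \<epsilon> n > 0) \<and> \<epsilon> \<longlonglongrightarrow> 0 \<and>
        (\<lambda>n. 1 - measure_pmf.prob Ypmf {y. pmf Ypmf y \<ge> \<epsilon> n / real n}) \<in> o(\<lambda>n. 1 / real n) \<and>
        (\<lambda>n. real (card {y. pmf Ypmf y \<ge> \<epsilon> n / real n})) \<in> O(\<lambda>n. ln (real n))"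
    and Ghat_GMLE: "\<And>n ys. ys \<in> set_pmf (Pi_pmf {..<n} 0 (\<lambda>_. Ypmf)) \<Longrightarrow> is_GMLE F n ys (Ghat n ys)"
    and eta_meas: "eta \<in> borel_measurable borel"
    and eta_int: "\<And>n ys. ys \<in> set_pmf (Pi_pmf {..<n} 0 (\<lambda>_. Ypmf)) \<Longrightarrow> integrable (Ghat n ys) eta"
    and Psi_bdd: "\<And>H y. \<bar>Psi H y\<bar> \<le> B"
    and Psi_unbiased: "\<And>n ys. ys \<in> set_pmf (Pi_pmf {..<n} 0 (\<lambda>_. Ypmf)) \<Longrightarrow>
        mix_expect F (Ghat n ys) (Psi (Ghat n ys)) = (\<integral>\<theta>. eta \<theta> \<partial>(Ghat n ys))"
  shows "\<forall>\<alpha>>0. \<forall>\<delta>>0. (\<lambda>n. measure_pmf.prob (Pi_pmf {..<n} 0 (\<lambda>_. Ypmf))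
           {ys. \<bar>(\<integral>\<theta>. eta \<theta> \<partial>(Ghat n ys)) - (\<Sum>i<n. Psi (Ghat n ys) (ys i)) / real n\<bar>
                 > \<delta> * ln (real n) powr ((1 + \<alpha>) / 2) / sqrt (real n)}) \<longlonglongrightarrow> 0"
proof (intro allI impI)
  fix \<alpha> \<delta> :: real assume \<alpha>: "\<alpha> > 0" and \<delta>: "\<delta> > 0"
  obtain \<epsilon> :: "nat \<Rightarrow> real" where \<epsilon>pos: "\<And>n. \<epsilon> n > 0"
    and tau_o: "(\<lambda>n. 1 - measure_pmf.prob Ypmf {y. pmf Ypmf y \<ge> \<epsilon> n / real n}) \<in> o(\<lambda>n. 1 / real n)"
    and card_O: "(\<lambda>n. real (card {y. pmf Ypmf y \<ge> \<epsilon> n / real n})) \<in> O(\<lambda>n. ln (real n))"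
    using cond by blast
  define S where "S n = {y. pmf Ypmf y \<ge> \<epsilon> n / real n}" for n
  define \<tau> where "\<tau> n = 1 - measure_pmf.prob Ypmf (S n)" for n
  define P where "P n = Pi_pmf {..<n} (0::nat) (\<lambda>_. Ypmf)" for n :: nat
  define L where "L n = ln (real n) powr ((1 + \<alpha>) / 2) / sqrt (real n)" for n
  define chi where "chi n ys = (\<Sum>y\<in>S n. (real (card {i\<in>{..<n}. ys i = y}) / real n - pmf Ypmf y)\<^sup>2 / pmf Ypmf y)"
    for n and ys :: "nat \<Rightarrow> nat"
  define T where "T n = {ys. \<bar>(\<integral>\<theta>. eta \<theta> \<partial>(Ghat n ys)) - (\<Sum>i<n. Psi (Ghat n ys) (ys i)) / real n\<bar>
                 > \<delta> * ln (real n) powr ((1 + \<alpha>) / 2) / sqrt (real n)}" for n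
  have B0: "B \<ge> 0" using Psi_bdd[of G 0] by linarith
  define c0 where "c0 = \<delta> / (18 * (B + 1))"
  have c0: "c0 > 0" unfolding c0_def using \<delta> B0 by simp
  define \<kappa> where "\<kappa> = (\<delta> / (10 * (B + 1)))\<^sup>2"
  have \<kappa>: "\<kappa> > 0" unfolding \<kappa>_def using \<delta> B0 by simp
  have finS: "finite (S n)" if "n > 0" for n
    unfolding S_def using \<epsilon>pos[of n] that by (intro finite_pmf_ge) simp
  have Spos: "pmf Ypmf y > 0" if "n > 0" "y \<in> S n" for n y
  proof -
    have "\<epsilon> n / real n > 0" using \<epsilon>pos[of n] that by simp
    then show ?thesis using that unfolding S_def by simp
  qed
  have tau01: "0 \<le> \<tau> n" "\<tau> n \<le> 1" for n unfolding \<tau>_def by auto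
  have ntau: "(\<lambda>n. real n * \<tau> n) \<longlonglongrightarrow> 0"
  proof -
    have "(\<lambda>n. \<tau> n / (1 / real n)) \<longlonglongrightarrow> 0"
      using smalloD_tendsto[OF tau_o] unfolding \<tau>_def S_def by simp
    then show ?thesis by (simp add: mult.commute)
  qed
  obtain C where C: "C > 0" and Cev: "eventually (\<lambda>n. norm (real (card (S n))) \<le> C * norm (ln (real n))) sequentially"
    using landau_o.bigE[OF card_O] unfolding S_def by blast
  have ev_ntau: "eventually (\<lambda>n. real n * \<tau> n \<le> \<kappa>) sequentially"
    using order_tendstoD(2)[OF ntau \<kappa>] by eventually_elim simp
  have ev3: "eventually (\<lambda>n. n \<ge> 3) sequentially" by (rule eventually_ge_at_top)
  have lnpowr_lim: "(\<lambda>n. ln (real n) powr (- \<alpha>)) \<longlonglongrightarrow> 0"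
  proof (rule tendsto_neg_powr)
    show "- \<alpha> < 0" using \<alpha> by simp
    show "filterlim (\<lambda>n. ln (real n)) at_top sequentially"
      by (rule filterlim_compose[OF ln_at_top filterlim_real_sequentially])
  qed
  have main: "measure_pmf.prob (P n) (T n) \<le> real n * \<tau> n + C / c0\<^sup>2 * ln (real n) powr (- \<alpha>)"
    if n3: "n \<ge> 3" and nt: "real n * \<tau> n \<le> \<kappa>" and cardb: "norm (real (card (S n))) \<le> C * norm (ln (real n))" for n
  proof -
    have npos: "n > 0" using n3 by simp
    have rn: "real n \<ge> 3" using n3 by simp
    have ln1: "ln (real n) \<ge> 1"
    proof -
      have "exp 1 \<le> (3::real)" using exp_le by simp
      then have "exp 1 \<le> real n" using rn by linarith
      then have "ln (exp 1) \<le> ln (real n)" using rn by (subst ln_le_cancel_iff) auto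
      then show ?thesis by simp
    qed
    have lnpos: "ln (real n) > 0" using ln1 by simp
    have sqn: "sqrt (real n) > 0" using npos by simp
    have Lge: "L n \<ge> 1 / sqrt (real n)"
    proof -
      have "ln (real n) powr ((1 + \<alpha>) / 2) \<ge> 1"
        using ln1 \<alpha> by (intro ge_one_powr_ge_zero) auto
      then show ?thesis unfolding L_def using sqn by (simp add: divide_right_mono)
    qed
    have Lpos: "L n > 0"
    proof -
      have "1 / sqrt (real n) > 0" using sqn by simp
      then show ?thesis using Lge by linarith
    qed
    define t where "t = (c0 * L n)\<^sup>2"
    have t: "t > 0" unfolding t_def using c0 Lpos by simp
    have sub: "T n \<inter> set_pmf (P n) \<subseteq> {ys. \<exists>i<n. ys i \<notin> S n} \<union> {ys. t \<le> chi n ys}"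
    proof
      fix ys assume ys: "ys \<in> T n \<inter> set_pmf (P n)"
      show "ys \<in> {ys. \<exists>i<n. ys i \<notin> S n} \<union> {ys. t \<le> chi n ys}"
      proof (rule ccontr)
        assume "\<not> ?thesis"
        then have inS: "\<And>i. i < n \<Longrightarrow> ys i \<in> S n" and chis: "chi n ys < t" by auto
        have ysP: "ys \<in> set_pmf (Pi_pmf {..<n} 0 (\<lambda>_. Ypmf))" using ys unfolding P_def by simp
        have supp: "ys i \<in> set_pmf Ypmf" if "i < n" for i
          using ysP that by (simp add: set_Pi_pmf PiE_dflt_def)
        have sb: "\<bar>(\<integral>\<theta>. eta \<theta> \<partial>(Ghat n ys)) - (\<Sum>i<n. Psi (Ghat n ys) (ys i)) / real n\<bar>
           \<le> B * (9 * sqrt (chi n ys) + 4 * sqrt (\<tau> n) + \<tau> n)"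
        proof -
          have sp: "(\<Sum>y\<in>S n. pmf Ypmf y) = measure_pmf.prob Ypmf (S n)"
            using finS[OF npos] by (simp add: measure_pmf_conv_infsetsum)
          show ?thesis
            using sample_bound[where Gh="Ghat n ys" and Psi=Psi and eta=eta and n=n and ys=ys and S="S n" and Ypmf=Ypmf and F=F and G=G and B=B, OF G_prob G_sets F_meas Y_marg Ghat_GMLE[OF ysP] Psi_unbiased[OF ysP]
                Psi_bdd npos supp finS[OF npos] Spos[OF npos] inS]
            unfolding chi_def \<tau>_def sp by simp
        qed
        have sqchi: "sqrt (chi n ys) \<le> c0 * L n"
        proof -
          have "sqrt (chi n ys) \<le> sqrt t" using chis by simp
          also have "sqrt t = c0 * L n" unfolding t_def using c0 Lpos by simp
          finally show ?thesis .
        qed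
        have sqtau: "sqrt (\<tau> n) \<le> sqrt \<kappa> / sqrt (real n)"
        proof -
          have "\<tau> n \<le> \<kappa> / real n" using nt npos by (simp add: field_simps)
          then have "sqrt (\<tau> n) \<le> sqrt (\<kappa> / real n)" by simp
          then show ?thesis by (simp add: real_sqrt_divide)
        qed
        have sk: "sqrt \<kappa> = \<delta> / (10 * (B + 1))" unfolding \<kappa>_def using \<delta> B0 by simp
        have tle: "\<tau> n \<le> sqrt (\<tau> n)"
        proof -
          have s1: "sqrt (\<tau> n) \<le> 1" using tau01[of n] by simp
          have "\<tau> n = sqrt (\<tau> n) * sqrt (\<tau> n)" using tau01[of n] by simp
          also have "\<dots> \<le> sqrt (\<tau> n) * 1" by (rule mult_left_mono[OF s1]) (use tau01[of n] in simp)
          finally show ?thesis by simp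
        qed
        have "B * (9 * sqrt (chi n ys) + 4 * sqrt (\<tau> n) + \<tau> n) \<le> (B + 1) * (9 * (c0 * L n) + 5 * (sqrt \<kappa> / sqrt (real n)))"
        proof -
          have "9 * sqrt (chi n ys) + 4 * sqrt (\<tau> n) + \<tau> n \<le> 9 * (c0 * L n) + 5 * (sqrt \<kappa> / sqrt (real n))"
            using sqchi sqtau tle by linarith
          moreover have "0 \<le> 9 * sqrt (chi n ys) + 4 * sqrt (\<tau> n) + \<tau> n"
          proof -
            have "0 \<le> chi n ys" unfolding chi_def using Spos[OF npos] by (intro sum_nonneg divide_nonneg_pos) auto
            then have "0 \<le> sqrt (chi n ys)" by simp
            moreover have "0 \<le> sqrt (\<tau> n)" using tau01[of n] by simp
            ultimately show ?thesis using tau01[of n] by linarith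
          qed
          ultimately show ?thesis
          proof -
            assume XY: "9 * sqrt (chi n ys) + 4 * sqrt (\<tau> n) + \<tau> n \<le> 9 * (c0 * L n) + 5 * (sqrt \<kappa> / sqrt (real n))"
              and X0: "0 \<le> 9 * sqrt (chi n ys) + 4 * sqrt (\<tau> n) + \<tau> n"
            have a: "B * (9 * sqrt (chi n ys) + 4 * sqrt (\<tau> n) + \<tau> n) \<le> B * (9 * (c0 * L n) + 5 * (sqrt \<kappa> / sqrt (real n)))"
              by (rule mult_left_mono[OF XY B0])
            have b: "B * (9 * (c0 * L n) + 5 * (sqrt \<kappa> / sqrt (real n))) \<le> (B + 1) * (9 * (c0 * L n) + 5 * (sqrt \<kappa> / sqrt (real n)))"
              by (rule mult_right_mono) (use XY X0 in linarith)+
            show ?thesis using a b by linarith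
          qed
        qed
        also have "\<dots> = \<delta> / 2 * L n + \<delta> / 2 * (1 / sqrt (real n))"
        proof -
          have e1: "(B + 1) * 9 * c0 = \<delta> / 2" unfolding c0_def using B0 by (simp add: field_simps)
          have e2: "(B + 1) * 5 * sqrt \<kappa> = \<delta> / 2" unfolding sk using B0 by (simp add: field_simps)
          have "(B + 1) * (9 * (c0 * L n) + 5 * (sqrt \<kappa> / sqrt (real n)))
              = ((B + 1) * 9 * c0) * L n + ((B + 1) * 5 * sqrt \<kappa>) * (1 / sqrt (real n))"
            by (simp add: algebra_simps add_divide_distrib)
          then show ?thesis unfolding e1 e2 .
        qed
        also have "\<dots> \<le> \<delta> / 2 * L n + \<delta> / 2 * L n"
          using Lge \<delta> by (intro add_left_mono mult_left_mono) auto
        also have "\<dots> = \<delta> * ln (real n) powr ((1 + \<alpha>) / 2) / sqrt (real n)" unfolding L_def by simp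
        finally have "\<bar>(\<integral>\<theta>. eta \<theta> \<partial>(Ghat n ys)) - (\<Sum>i<n. Psi (Ghat n ys) (ys i)) / real n\<bar>
            \<le> \<delta> * ln (real n) powr ((1 + \<alpha>) / 2) / sqrt (real n)" using sb by linarith
        then show False using ys unfolding T_def by simp
      qed
    qed
    have "measure_pmf.prob (P n) (T n) = measure_pmf.prob (P n) (T n \<inter> set_pmf (P n))"
      by (simp add: measure_Int_set_pmf)
    also have "\<dots> \<le> measure_pmf.prob (P n) ({ys. \<exists>i<n. ys i \<notin> S n} \<union> {ys. t \<le> chi n ys})"
      by (rule measure_pmf.finite_measure_mono[OF sub]) simp
    also have "\<dots> \<le> measure_pmf.prob (P n) {ys. \<exists>i<n. ys i \<notin> S n} + measure_pmf.prob (P n) {ys. t \<le> chi n ys}"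
      by (rule measure_Un_le) auto
    also have "measure_pmf.prob (P n) {ys. \<exists>i<n. ys i \<notin> S n} \<le> real n * \<tau> n"
      unfolding P_def \<tau>_def by (rule bad_event)
    also have "measure_pmf.prob (P n) {ys. t \<le> chi n ys} \<le> real (card (S n)) / (real n * t)"
      unfolding P_def chi_def by (rule chi_markov[OF finS[OF npos] Spos[OF npos] npos t])
    also have "real (card (S n)) / (real n * t) \<le> C / c0\<^sup>2 * ln (real n) powr (- \<alpha>)"
    proof -
      have Lsq: "(L n)\<^sup>2 = ln (real n) * ln (real n) powr \<alpha> / real n"
      proof -
        have "(ln (real n) powr ((1 + \<alpha>) / 2))\<^sup>2 = ln (real n) powr (1 + \<alpha>)"
        proof -
          have "(ln (real n) powr ((1 + \<alpha>) / 2))\<^sup>2 = ln (real n) powr ((1 + \<alpha>) / 2) * ln (real n) powr ((1 + \<alpha>) / 2)"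
            by (simp add: power2_eq_square)
          also have "\<dots> = ln (real n) powr ((1 + \<alpha>) / 2 + (1 + \<alpha>) / 2)" by (simp only: powr_add)
          also have "(1 + \<alpha>) / 2 + (1 + \<alpha>) / 2 = 1 + \<alpha>" by simp
          finally show ?thesis .
        qed
        also have "\<dots> = ln (real n) * ln (real n) powr \<alpha>" using lnpos by (simp add: powr_add)
        finally show ?thesis unfolding L_def using npos by (simp add: power_divide)
      qed
      have nt_eq: "real n * t = c0\<^sup>2 * ln (real n) * ln (real n) powr \<alpha>"
        unfolding t_def using npos Lsq by (simp add: power_mult_distrib)
      have cardle: "real (card (S n)) \<le> C * ln (real n)" using cardb lnpos by simp
      have "real (card (S n)) / (real n * t) \<le> C * ln (real n) / (c0\<^sup>2 * ln (real n) * ln (real n) powr \<alpha>)"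
        unfolding nt_eq using cardle c0 lnpos by (intro divide_right_mono) auto
      also have "\<dots> = C / c0\<^sup>2 * ln (real n) powr (- \<alpha>)"
        using lnpos c0 by (simp add: powr_minus field_simps)
      finally show ?thesis .
    qed
    finally show ?thesis by simp
  qed
  have lim: "(\<lambda>n. real n * \<tau> n + C / c0\<^sup>2 * ln (real n) powr (- \<alpha>)) \<longlonglongrightarrow> 0"
    using tendsto_add[OF ntau tendsto_mult_right_zero[OF lnpowr_lim, of "C / c0\<^sup>2"]] by simp
  have "(\<lambda>n. measure_pmf.prob (P n) (T n)) \<longlonglongrightarrow> 0"
  proof (rule tendsto_sandwich[OF _ _ tendsto_const lim])
    show "eventually (\<lambda>n. 0 \<le> measure_pmf.prob (P n) (T n)) sequentially" by simp
    show "eventually (\<lambda>n. measure_pmf.prob (P n) (T n) \<le> real n * \<tau> n + C / c0\<^sup>2 * ln (real n) powr (- \<alpha>)) sequentially"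
      using ev3 ev_ntau Cev by eventually_elim (rule main)
  qed
  then show "(\<lambda>n. measure_pmf.prob (Pi_pmf {..<n} 0 (\<lambda>_. Ypmf))
           {ys. \<bar>(\<integral>\<theta>. eta \<theta> \<partial>(Ghat n ys)) - (\<Sum>i<n. Psi (Ghat n ys) (ys i)) / real n\<bar>
                 > \<delta> * ln (real n) powr ((1 + \<alpha>) / 2) / sqrt (real n)}) \<longlonglongrightarrow> 0"
    unfolding P_def T_def .
qed


end
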